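(* Let $\mathbf{n}^\xi_{1:H}$ be a sequence of count tables generated by the joint state-action trajectory of $M$ agents over horizon $H$ (as described in the context), and define for $t=1,\dots,H$ $$R^\xi_t=\sum_{T=t}^H\sum_{i\in S,j\in A}n^\xi_T(i,j)\,r_T\big(i,j,\mathbf{n}^\xi_T\big).$$ Let $V^\xi_t(i,j)$ be the individual value function defined in the context. Then for every $t$, $$R^\xi_t=\sum_{i\in S,j\in A}n^\xi_t(i,j)\,V^\xi_t(i,j).$$
   Context: There are $M$ agents, a finite local state space $S$, finite action set $A$, horizon $H$. A joint trajectory assigns each agent $m$ states $s^m_1,\dots,s^m_H\in S$ and actions $a^m_1,\dots,a^m_H\in A$. Its counts are $n^\xi_t(i)=|\{m:s^m_t=i\}|$, $n^\xi_t(i,j)=|\{m:(s^m_t,a^m_t)=(i,j)\}|$, $n^\xi_t(i,j,i')=|\{m:(s^m_t,a^m_t,s^m_{t+1})=(i,j,i')\}|$ for $t<H$, and $\mathbf{n}^\xi_t=(n^\xi_t(i))_{i\in S}$. $r_t(i,j,\mathbf{n})$ is a given real-valued local reward function. The individual value function is defined, for pairs $(i,j)$ with $n^\xi_t(i,j)>0$, by backward recursion: $V^\xi_H(i,j)=r_H(i,j,\mathbf{n}^\xi_H)$ and, for $t<H$, $$V^\xi_t(i,j)=r_t(i,j,\mathbf{n}^\xi_t)+\sum_{i'\in S,j'\in A}\frac{n^\xi_t(i,j,i')}{n^\xi_t(i,j)}\cdot\frac{n^\xi_{t+1}(i',j')}{n^\xi_{t+1}(i')}\,V^\xi_{t+1}(i',j'),$$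 where terms with zero count numerator are taken to be $0$; likewise $n^\xi_t(i,j)V^\xi_t(i,j)$ is taken to be $0$ when $n^\xi_t(i,j)=0$. *)

theory Defs
  imports Complex_Main
begin

(* Agents are 0..M-1; local states of type 's, actions of type 'a (finite types).
   st m t / ac m t : state / action of agent m at time t (times 1..H are relevant). *)

definition cnt1 :: "nat \<Rightarrow> (nat \<Rightarrow> nat \<Rightarrow> 's) \<Rightarrow> nat \<Rightarrow> 's \<Rightarrow> nat" where
  "cnt1 M st t i = card {m \<in> {..<M}. st m t = i}"

definition cnt2 :: "nat \<Rightarrow> (nat \<Rightarrow> nat \<Rightarrow> 's) \<Rightarrow> (nat \<Rightarrow> nat \<Rightarrow> 'a) \<Rightarrow> nat \<Rightarrow> 's \<Rightarrow> 'a \<Rightarrow> nat" where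
  "cnt2 M st ac t i j = card {m \<in> {..<M}. st m t = i \<and> ac m t = j}"

definition cnt3 :: "nat \<Rightarrow> (nat \<Rightarrow> nat \<Rightarrow> 's) \<Rightarrow> (nat \<Rightarrow> nat \<Rightarrow> 'a) \<Rightarrow> nat \<Rightarrow> 's \<Rightarrow> 'a \<Rightarrow> 's \<Rightarrow> nat" where
  "cnt3 M st ac t i j i' = card {m \<in> {..<M}. st m t = i \<and> ac m t = j \<and> st m (Suc t) = i'}"

(* Individual value function, computed backwards: Vaux k is V at time H - k. *)
primrec Vaux :: "nat \<Rightarrow> nat \<Rightarrow> (nat \<Rightarrow> nat \<Rightarrow> 's::finite) \<Rightarrow> (nat \<Rightarrow> nat \<Rightarrow> 'a::finite)
     \<Rightarrow> (nat \<Rightarrow> 's \<Rightarrow> 'a \<Rightarrow> ('s \<Rightarrow> nat) \<Rightarrow> real) \<Rightarrow> nat \<Rightarrow> 's \<Rightarrow> 'a \<Rightarrow> real" where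
  "Vaux M H st ac r 0 i j = r H i j (cnt1 M st H)"
| "Vaux M H st ac r (Suc k) i j =
     (let t = H - Suc k in
      r t i j (cnt1 M st t) +
      (\<Sum>i'\<in>UNIV. \<Sum>j'\<in>UNIV.
         (if cnt3 M st ac t i j i' = 0 \<or> cnt2 M st ac (Suc t) i' j' = 0 then 0
          else (real (cnt3 M st ac t i j i') / real (cnt2 M st ac t i j)) *
               (real (cnt2 M st ac (Suc t) i' j') / real (cnt1 M st (Suc t) i')) *
               Vaux M H st ac r k i' j')))"

definition Vval :: "nat \<Rightarrow> nat \<Rightarrow> (nat \<Rightarrow> nat \<Rightarrow> 's::finite) \<Rightarrow> (nat \<Rightarrow> nat \<Rightarrow> 'a::finite)
     \<Rightarrow> (nat \<Rightarrow> 's \<Rightarrow> 'a \<Rightarrow> ('s \<Rightarrow> nat) \<Rightarrow> real) \<Rightarrow> nat \<Rightarrow> 's \<Rightarrow> 'a \<Rightarrow> real" where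
  "Vval M H st ac r t i j = Vaux M H st ac r (H - t) i j"

definition Rret :: "nat \<Rightarrow> nat \<Rightarrow> (nat \<Rightarrow> nat \<Rightarrow> 's::finite) \<Rightarrow> (nat \<Rightarrow> nat \<Rightarrow> 'a::finite)
     \<Rightarrow> (nat \<Rightarrow> 's \<Rightarrow> 'a \<Rightarrow> ('s \<Rightarrow> nat) \<Rightarrow> real) \<Rightarrow> nat \<Rightarrow> real" where
  "Rret M H st ac r t = (\<Sum>T\<in>{t..H}. \<Sum>i\<in>UNIV. \<Sum>j\<in>UNIV.
       real (cnt2 M st ac T i j) * r T i j (cnt1 M st T))"

end

theory Submission
  imports Defs
begin

lemma card_as_sum: "card {m \<in> {..<M::nat}. P m} = (\<Sum>m<M. if P m then 1 else (0::nat))"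
  by (simp add: sum.If_cases Int_def)

lemma cnt3_sum:
  fixes st :: "nat \<Rightarrow> nat \<Rightarrow> 's::finite" and ac :: "nat \<Rightarrow> nat \<Rightarrow> 'a::finite"
  shows "(\<Sum>i\<in>UNIV. \<Sum>j\<in>UNIV. real (cnt3 M st ac t i j i')) = real (cnt1 M st (Suc t) i')"
proof -
  have "(\<Sum>i\<in>UNIV. \<Sum>j\<in>UNIV. real (cnt3 M st ac t i j i'))
     = (\<Sum>i\<in>UNIV. \<Sum>j\<in>UNIV. \<Sum>m<M. if st m t = i \<and> ac m t = j \<and> st m (Suc t) = i' then 1 else (0::real))"
    unfolding cnt3_def card_as_sum by (simp add: of_nat_sum if_distrib cong: if_cong)
  also have "\<dots> = (\<Sum>m<M. \<Sum>i\<in>UNIV. \<Sum>j\<in>UNIV. if st m t = i \<and> ac m t = j \<and> st m (Suc t) = i' then 1 else (0::real))"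
    proof -
    have "\<And>i. (\<Sum>j\<in>UNIV. \<Sum>m<M. if st m t = i \<and> ac m t = j \<and> st m (Suc t) = i' then 1 else (0::real))
       = (\<Sum>m<M. \<Sum>j\<in>UNIV. if st m t = i \<and> ac m t = j \<and> st m (Suc t) = i' then 1 else (0::real))"
      by (rule sum.swap)
    then show ?thesis by (simp only: sum.swap[of _ UNIV "{..<M}"])
  qed
  also have "\<dots> = (\<Sum>m<M. if st m (Suc t) = i' then 1 else (0::real))"
  proof (rule sum.cong[OF refl])
    fix m
    have "(\<Sum>i\<in>UNIV. \<Sum>j\<in>UNIV. if st m t = i \<and> ac m t = j \<and> st m (Suc t) = i' then 1 else (0::real))
        = (\<Sum>i\<in>UNIV. if st m t = i then (\<Sum>j\<in>UNIV. if ac m t = j then (if st m (Suc t) = i' then 1 else 0) else (0::real)) else 0)"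
      by (intro sum.cong refl) auto
    also have "\<dots> = (if st m (Suc t) = i' then 1 else 0)"
      by (simp add: sum.delta)
    finally show "(\<Sum>i\<in>UNIV. \<Sum>j\<in>UNIV. if st m t = i \<and> ac m t = j \<and> st m (Suc t) = i' then 1 else (0::real))
        = (if st m (Suc t) = i' then 1 else 0)" .
  qed
  also have "\<dots> = real (cnt1 M st (Suc t) i')"
    unfolding cnt1_def card_as_sum by (simp add: of_nat_sum if_distrib cong: if_cong)
  finally show ?thesis .
qed

lemma cnt3_le: "cnt3 M st ac t i j i' \<le> cnt2 M st ac t i j"
  unfolding cnt3_def cnt2_def by (rule card_mono) auto

lemma cnt2_le: "cnt2 M st ac t i j \<le> cnt1 M st t i"
  unfolding cnt1_def cnt2_def by (rule card_mono) auto

lemma step: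
  fixes st :: "nat \<Rightarrow> nat \<Rightarrow> 's::finite" and ac :: "nat \<Rightarrow> nat \<Rightarrow> 'a::finite"
  assumes "t < H"
  shows "(\<Sum>i\<in>UNIV. \<Sum>j\<in>UNIV. real (cnt2 M st ac t i j) * Vval M H st ac r t i j)
    = (\<Sum>i\<in>UNIV. \<Sum>j\<in>UNIV. real (cnt2 M st ac t i j) * r t i j (cnt1 M st t))
    + (\<Sum>i\<in>UNIV. \<Sum>j\<in>UNIV. real (cnt2 M st ac (Suc t) i j) * Vval M H st ac r (Suc t) i j)"
proof -
  define k where "k = H - Suc t"
  have Hk: "H - t = Suc k" "H - Suc k = t" using assms by (auto simp: k_def)
  define c where "c i' j' = (if cnt2 M st ac (Suc t) i' j' = 0 then 0 else
       real (cnt2 M st ac (Suc t) i' j') / real (cnt1 M st (Suc t) i') * Vaux M H st ac r k i' j')" for i' j'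
  have trm: "real (cnt2 M st ac t i j) *
      (if cnt3 M st ac t i j i' = 0 \<or> cnt2 M st ac (Suc t) i' j' = 0 then 0
          else (real (cnt3 M st ac t i j i') / real (cnt2 M st ac t i j)) *
               (real (cnt2 M st ac (Suc t) i' j') / real (cnt1 M st (Suc t) i')) *
               Vaux M H st ac r k i' j')
      = real (cnt3 M st ac t i j i') * c i' j'" for i j i' j'
  proof (cases "cnt3 M st ac t i j i' = 0")
    case False
    then have "cnt2 M st ac t i j > 0" using cnt3_le[of M st ac t i j i'] by linarith
    then show ?thesis using False by (simp add: c_def)
  qed (simp add: c_def)
  have "(\<Sum>i\<in>UNIV. \<Sum>j\<in>UNIV. real (cnt2 M st ac t i j) * Vval M H st ac r t i j)
     = (\<Sum>i\<in>UNIV. \<Sum>j\<in>UNIV. real (cnt2 M st ac t i j) * r t i j (cnt1 M st t))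
       + (\<Sum>i\<in>UNIV. \<Sum>j\<in>UNIV. \<Sum>i'\<in>UNIV. \<Sum>j'\<in>UNIV. real (cnt3 M st ac t i j i') * c i' j')"
    unfolding Vval_def Hk Vaux.simps Let_def
    by (simp add: distrib_left sum.distrib sum_distrib_left trm)
  also have "(\<Sum>i\<in>UNIV. \<Sum>j\<in>UNIV. \<Sum>i'\<in>UNIV. \<Sum>j'\<in>UNIV. real (cnt3 M st ac t i j i') * c i' j')
      = (\<Sum>i'\<in>UNIV. \<Sum>j'\<in>UNIV. (\<Sum>i\<in>UNIV. \<Sum>j\<in>UNIV. real (cnt3 M st ac t i j i')) * c i' j')"
  proof -
    have "(\<Sum>i\<in>UNIV. \<Sum>j\<in>UNIV. \<Sum>i'\<in>UNIV. \<Sum>j'\<in>UNIV. real (cnt3 M st ac t i j i') * c i' j')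
        = (\<Sum>i\<in>UNIV. \<Sum>i'\<in>UNIV. \<Sum>j\<in>UNIV. \<Sum>j'\<in>UNIV. real (cnt3 M st ac t i j i') * c i' j')"
      by (rule sum.cong[OF refl], rule sum.swap)
    also have "\<dots> = (\<Sum>i'\<in>UNIV. \<Sum>i\<in>UNIV. \<Sum>j\<in>UNIV. \<Sum>j'\<in>UNIV. real (cnt3 M st ac t i j i') * c i' j')"
      by (rule sum.swap)
    also have "\<dots> = (\<Sum>i'\<in>UNIV. \<Sum>i\<in>UNIV. \<Sum>j'\<in>UNIV. \<Sum>j\<in>UNIV. real (cnt3 M st ac t i j i') * c i' j')"
      by (rule sum.cong[OF refl], rule sum.cong[OF refl], rule sum.swap)
    also have "\<dots> = (\<Sum>i'\<in>UNIV. \<Sum>j'\<in>UNIV. \<Sum>i\<in>UNIV. \<Sum>j\<in>UNIV. real (cnt3 M st ac t i j i') * c i' j')"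
      by (rule sum.cong[OF refl], rule sum.swap)
    also have "\<dots> = (\<Sum>i'\<in>UNIV. \<Sum>j'\<in>UNIV. (\<Sum>i\<in>UNIV. \<Sum>j\<in>UNIV. real (cnt3 M st ac t i j i')) * c i' j')"
      by (simp only: sum_distrib_right)
    finally show ?thesis .
  qed
  also have "\<dots> = (\<Sum>i'\<in>UNIV. \<Sum>j'\<in>UNIV. real (cnt1 M st (Suc t) i') * c i' j')"
    by (simp add: cnt3_sum)
  also have "\<dots> = (\<Sum>i\<in>UNIV. \<Sum>j\<in>UNIV. real (cnt2 M st ac (Suc t) i j) * Vval M H st ac r (Suc t) i j)"
  proof (intro sum.cong refl)
    fix i' j'
    have kk: "H - Suc t = k" by (simp add: k_def)
    show "real (cnt1 M st (Suc t) i') * c i' j' = real (cnt2 M st ac (Suc t) i' j') * Vval M H st ac r (Suc t) i' j'"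
    proof (cases "cnt2 M st ac (Suc t) i' j' = 0")
      case False
      then have "cnt1 M st (Suc t) i' > 0" using cnt2_le[of M st ac "Suc t" i' j'] by linarith
      then show ?thesis using False by (simp add: c_def Vval_def kk)
    qed (simp add: c_def)
  qed
  finally show ?thesis .
qed

theorem lemma1:
  fixes M H :: nat
    and st :: "nat \<Rightarrow> nat \<Rightarrow> 's::finite"
    and ac :: "nat \<Rightarrow> nat \<Rightarrow> 'a::finite"
    and r :: "nat \<Rightarrow> 's \<Rightarrow> 'a \<Rightarrow> ('s \<Rightarrow> nat) \<Rightarrow> real"
    and t :: nat
  assumes "1 \<le> t" and "t \<le> H"
  shows "Rret M H st ac r t =
         (\<Sum>i\<in>UNIV. \<Sum>j\<in>UNIV. real (cnt2 M st ac t i j) * Vval M H st ac r t i j)"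
  using assms(2)
proof (induction "H - t" arbitrary: t)
  case 0
  then have "t = H" by simp
  then show ?case by (simp add: Rret_def Vval_def)
next
  case (Suc x)
  then have lt: "t < H" and x: "x = H - Suc t" by auto
  have IH: "Rret M H st ac r (Suc t) = (\<Sum>i\<in>UNIV. \<Sum>j\<in>UNIV. real (cnt2 M st ac (Suc t) i j) * Vval M H st ac r (Suc t) i j)"
    using Suc.hyps(1)[OF x] lt by simp
  have "{t..H} = insert t {Suc t..H}" using lt by auto
  then have "Rret M H st ac r t = (\<Sum>i\<in>UNIV. \<Sum>j\<in>UNIV. real (cnt2 M st ac t i j) * r t i j (cnt1 M st t)) + Rret M H st ac r (Suc t)"
    unfolding Rret_def by simp
  then show ?case using IH step[OF lt, of M st ac r] by linarith
qed

end
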